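(* Let $\lambda,\beta,\epsilon>0$ and $\gamma>0$ with $0<\epsilon<\gamma^2\beta/4$, and let $\|\cdot\|_*$ be the norm defined in the context. (i) There exists $\eta_1>0$ such that for any fluid model $(y,x)$, at any regular point $t$ with $x(t)>-\lambda/\beta$, $\frac{d}{dt}\|(y(t),x(t))\|_*\le-\eta_1\|(y(t),x(t))\|_*$. (ii) There exists $\eta_2>0$ such that for any fluid model, at any regular point $t$ with $x(t)=-\lambda/\beta$ and $y(t)\ge\gamma\lambda/\epsilon$, $\frac{d}{dt}\|(y(t),x(t))\|_*\le-\eta_2$. (iii) There exist $\eta>0$ and $C>0$ such that for any fluid model, at any regular point $t$, $\|(y(t),x(t))\|_*\ge C$ implies $\frac{d}{dt}\|(y(t),x(t))\|_*\le-\eta$.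
   Context: Let $A=\begin{bmatrix}0&-\epsilon\\ \beta&-\gamma\beta\end{bmatrix}$; under $0<\epsilon<\gamma^2\beta/4$, $A$ has two distinct negative eigenvalues $-\nu_2<-\nu_1<0$. Let $v_i=(\beta/\nu_i,-1)$, $i=1,2$ (row vectors with $v_iA=-\nu_iv_i$). For $u\in\mathbb{R}^2$ write $u=\alpha_1v_1+\alpha_2v_2$ and set $\|u\|_*=(\alpha_1^2+\alpha_2^2)^{1/2}$. A fluid model is a locally Lipschitz continuous trajectory $(y(t),x(t))$, $t\ge0$, such that $x(t)\ge-\lambda/\beta$ for all $t$ and, at every regular point $t$: if $x(t)>-\lambda/\beta$ then $y'(t)=\beta x(t)$, $x'(t)=-\gamma\beta x(t)-\epsilon y(t)$; if $x(t)=-\lambda/\beta$ then $y'(t)=-\lambda$, $x'(t)=[\gamma\lambda-\epsilon y(t)]\vee0$. A point $t$ is regular if for every nonempty subset of $\{y,x\}$ the derivatives of the pointwise maximum and minimum over that subset exist at $t$. *)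

theory Defs
  imports "HOL-Analysis.Analysis"
begin

text \<open>The eigenvalues of A = [[0, -eps], [beta, -gam*beta]] are the roots of
  s^2 + gam*beta*s + eps*beta = 0, i.e. -nu2 < -nu1 < 0 with the values below.\<close>

definition nu1 :: "real \<Rightarrow> real \<Rightarrow> real \<Rightarrow> real" where
  "nu1 beta eps gam = (gam * beta - sqrt ((gam * beta)\<^sup>2 - 4 * eps * beta)) / 2"

definition nu2 :: "real \<Rightarrow> real \<Rightarrow> real \<Rightarrow> real" where
  "nu2 beta eps gam = (gam * beta + sqrt ((gam * beta)\<^sup>2 - 4 * eps * beta)) / 2"

text \<open>Left eigenvectors v_i = (beta/nu_i, -1).\<close>
definition vvec :: "real \<Rightarrow> real \<Rightarrow> (real \<times> real)" where
  "vvec beta nu = (beta / nu, -1)"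

definition star_norm :: "real \<Rightarrow> real \<Rightarrow> real \<Rightarrow> real \<times> real \<Rightarrow> real" where
  "star_norm beta eps gam u =
     (let (a1, a2) = (THE (a1, a2). u = a1 *\<^sub>R vvec beta (nu1 beta eps gam)
                                       + a2 *\<^sub>R vvec beta (nu2 beta eps gam))
      in sqrt (a1\<^sup>2 + a2\<^sup>2))"

definition regular_point :: "(real \<Rightarrow> real) \<Rightarrow> (real \<Rightarrow> real) \<Rightarrow> real \<Rightarrow> bool" where
  "regular_point y x t \<longleftrightarrow> 0 \<le> t \<and>
     y differentiable (at t within {0..}) \<and>
     x differentiable (at t within {0..}) \<and>
     (\<lambda>s. max (y s) (x s)) differentiable (at t within {0..}) \<and>
     (\<lambda>s. min (y s) (x s)) differentiable (at t within {0..})"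

definition locally_lipschitz_traj :: "(real \<Rightarrow> real) \<Rightarrow> (real \<Rightarrow> real) \<Rightarrow> bool" where
  "locally_lipschitz_traj y x \<longleftrightarrow>
     (\<forall>T\<ge>0. \<exists>L. L-lipschitz_on {0..T} (\<lambda>t. (y t, x t)))"

definition fluid_model ::
  "real \<Rightarrow> real \<Rightarrow> real \<Rightarrow> real \<Rightarrow> (real \<Rightarrow> real) \<Rightarrow> (real \<Rightarrow> real) \<Rightarrow> bool" where
  "fluid_model lam beta eps gam y x \<longleftrightarrow>
     locally_lipschitz_traj y x \<and>
     (\<forall>t\<ge>0. x t \<ge> - lam / beta) \<and>
     (\<forall>t. regular_point y x t \<longrightarrow>
        (x t > - lam / beta \<longrightarrow>
           (y has_real_derivative (beta * x t)) (at t within {0..}) \<and>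
           (x has_real_derivative (- gam * beta * x t - eps * y t)) (at t within {0..})) \<and>
        (x t = - lam / beta \<longrightarrow>
           (y has_real_derivative (- lam)) (at t within {0..}) \<and>
           (x has_real_derivative (max (gam * lam - eps * y t) 0)) (at t within {0..})))"

end

theory Submission
  imports Defs
begin

lemma norm_deriv_nz:
  fixes a1 a2 :: "real \<Rightarrow> real"
  assumes d1: "(a1 has_real_derivative b1) (at t within S)"
    and d2: "(a2 has_real_derivative b2) (at t within S)"
    and nz: "a1 t \<noteq> 0 \<or> a2 t \<noteq> 0"
  shows "((\<lambda>s. sqrt ((a1 s)\<^sup>2 + (a2 s)\<^sup>2)) has_real_derivative
           (a1 t * b1 + a2 t * b2) / sqrt ((a1 t)\<^sup>2 + (a2 t)\<^sup>2)) (at t within S)"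
proof -
  have pos: "(a1 t)\<^sup>2 + (a2 t)\<^sup>2 > 0" using nz by (simp add: sum_power2_gt_zero_iff)
  have g: "((\<lambda>s. (a1 s)\<^sup>2 + (a2 s)\<^sup>2) has_real_derivative (2 * a1 t * b1 + 2 * a2 t * b2)) (at t within S)"
    using d1 d2 by (auto intro!: derivative_eq_intros)
  have DD: "((\<lambda>s. sqrt ((a1 s)\<^sup>2 + (a2 s)\<^sup>2)) has_real_derivative
           (inverse (sqrt ((a1 t)\<^sup>2 + (a2 t)\<^sup>2)) / 2) * (2 * a1 t * b1 + 2 * a2 t * b2)) (at t within S)"
    using DERIV_chain2[OF DERIV_real_sqrt[OF pos] g] by simp
  have EE: "(inverse (sqrt ((a1 t)\<^sup>2 + (a2 t)\<^sup>2)) / 2) * (2 * a1 t * b1 + 2 * a2 t * b2)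
      = (a1 t * b1 + a2 t * b2) / sqrt ((a1 t)\<^sup>2 + (a2 t)\<^sup>2)"
    by (cases "sqrt ((a1 t)\<^sup>2 + (a2 t)\<^sup>2) = 0") (simp_all add: field_simps)
  show ?thesis using DD unfolding EE .
qed

lemma norm_deriv_z:
  fixes a1 a2 :: "real \<Rightarrow> real"
  assumes d1: "(a1 has_real_derivative 0) (at t within S)"
    and d2: "(a2 has_real_derivative 0) (at t within S)"
    and z: "a1 t = 0" "a2 t = 0"
  shows "((\<lambda>s. sqrt ((a1 s)\<^sup>2 + (a2 s)\<^sup>2)) has_real_derivative 0) (at t within S)"
proof -
  have l1: "((\<lambda>s. a1 s / (s - t)) \<longlongrightarrow> 0) (at t within S)"
    using d1 z unfolding has_field_derivative_iff by simp
  have l2: "((\<lambda>s. a2 s / (s - t)) \<longlongrightarrow> 0) (at t within S)"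
    using d2 z unfolding has_field_derivative_iff by simp
  have "((\<lambda>s. sqrt ((a1 s / (s - t))\<^sup>2 + (a2 s / (s - t))\<^sup>2)) \<longlongrightarrow> sqrt (0\<^sup>2 + 0\<^sup>2)) (at t within S)"
    by (intro tendsto_intros l1 l2)
  hence l3: "((\<lambda>s. sqrt ((a1 s / (s - t))\<^sup>2 + (a2 s / (s - t))\<^sup>2)) \<longlongrightarrow> 0) (at t within S)" by simp
  have eq: "\<bar>sqrt ((a1 s)\<^sup>2 + (a2 s)\<^sup>2) / (s - t)\<bar> = sqrt ((a1 s / (s - t))\<^sup>2 + (a2 s / (s - t))\<^sup>2)" for s
  proof -
    have "sqrt ((a1 s / (s - t))\<^sup>2 + (a2 s / (s - t))\<^sup>2) = sqrt (((a1 s)\<^sup>2 + (a2 s)\<^sup>2) / (s-t)\<^sup>2)"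
      by (simp add: power_divide add_divide_distrib)
    also have "\<dots> = sqrt ((a1 s)\<^sup>2 + (a2 s)\<^sup>2) / \<bar>s - t\<bar>"
      by (simp add: real_sqrt_divide)
    finally show ?thesis by (simp add: abs_div_pos)
  qed
  have "((\<lambda>s. \<bar>sqrt ((a1 s)\<^sup>2 + (a2 s)\<^sup>2) / (s - t)\<bar>) \<longlongrightarrow> 0) (at t within S)"
    unfolding eq by (rule l3)
  hence "((\<lambda>s. sqrt ((a1 s)\<^sup>2 + (a2 s)\<^sup>2) / (s - t)) \<longlongrightarrow> 0) (at t within S)"
    by (simp only: tendsto_rabs_zero_iff)
  thus ?thesis unfolding has_field_derivative_iff using z by simp
qed

lemma coords:
  fixes beta n1 n2 y x a1 a2 :: real
  assumes "beta>0" "0<n1" "n1<n2"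
  shows "(y,x) = a1 *\<^sub>R (beta/n1, -1) + a2 *\<^sub>R (beta/n2, -1) \<longleftrightarrow>
     a1 = n1*(n2*y+beta*x)/(beta*(n2-n1)) \<and> a2 = -n2*(n1*y+beta*x)/(beta*(n2-n1))"
proof
  have ne: "n2 - n1 \<noteq> 0" "beta \<noteq> 0" "n1 \<noteq> 0" "n2 \<noteq> 0" using assms by auto
  assume "(y,x) = a1 *\<^sub>R (beta/n1, -1) + a2 *\<^sub>R (beta/n2, -1)"
  hence y: "y = a1*(beta/n1) + a2*(beta/n2)" and x: "x = -a1-a2" by auto
  have "n2*y = a1*(beta*n2/n1) + a2*beta" unfolding y using ne by (simp add: distrib_left)
  hence "n2*y+beta*x = a1*(beta*n2/n1 - beta)" unfolding x by (simp add: algebra_simps)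
  also have "beta*n2/n1 - beta = beta*(n2-n1)/n1" using ne by (simp add: diff_divide_distrib right_diff_distrib)
  finally have h1: "n2*y+beta*x = a1*(beta*(n2-n1)/n1)" .
  have "n1*y = a1*beta + a2*(beta*n1/n2)" unfolding y using ne by (simp add: distrib_left)
  hence "n1*y+beta*x = a2*(beta*n1/n2 - beta)" unfolding x by (simp add: algebra_simps)
  also have "beta*n1/n2 - beta = -(beta*(n2-n1)/n2)" using ne by (simp add: diff_divide_distrib right_diff_distrib)
  finally have h2: "n1*y+beta*x = -(a2*(beta*(n2-n1)/n2))" by simp
  show "a1 = n1*(n2*y+beta*x)/(beta*(n2-n1)) \<and> a2 = -n2*(n1*y+beta*x)/(beta*(n2-n1))"
    unfolding h1 h2 using ne by simp
next
  assume "a1 = n1*(n2*y+beta*x)/(beta*(n2-n1)) \<and> a2 = -n2*(n1*y+beta*x)/(beta*(n2-n1))"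
  hence a1: "a1 = n1*(n2*y+beta*x)/(beta*(n2-n1))" and a2: "a2 = -n2*(n1*y+beta*x)/(beta*(n2-n1))" by auto
  have ne: "n2 - n1 \<noteq> 0" "beta \<noteq> 0" "n1 \<noteq> 0" "n2 \<noteq> 0" using assms by auto
  have e1: "a1*(beta/n1) = (n2*y+beta*x)/(n2-n1)" unfolding a1 using ne by (simp add: field_simps)
  have e2: "a2*(beta/n2) = -(n1*y+beta*x)/(n2-n1)" unfolding a2 using ne by (simp add: field_simps)
  have f1: "(n2*y+beta*x)/(n2-n1) + -(n1*y+beta*x)/(n2-n1) = ((n2*y+beta*x) + -(n1*y+beta*x))/(n2-n1)"
    by (rule add_divide_distrib[symmetric])
  have f2: "(n2*y+beta*x) + -(n1*y+beta*x) = (n2-n1)*y" by (simp add: algebra_simps)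
  have yy: "y = a1*(beta/n1) + a2*(beta/n2)" unfolding e1 e2 f1 f2 using ne by simp
  have f3: "a1 + a2 = (n1*(n2*y+beta*x) + -n2*(n1*y+beta*x))/(beta*(n2-n1))"
    unfolding a1 a2 by (rule add_divide_distrib[symmetric])
  have f4: "n1*(n2*y+beta*x) + -n2*(n1*y+beta*x) = (beta*(n2-n1))*(-x)" by (simp add: algebra_simps)
  have xx: "x = -a1 - a2" using f3 f4 ne by auto
  show "(y,x) = a1 *\<^sub>R (beta/n1, -1) + a2 *\<^sub>R (beta/n2, -1)"
    using xx yy by (simp add: prod_eq_iff)
qed

definition cA1 :: "real \<Rightarrow> real \<Rightarrow> real \<Rightarrow> real \<Rightarrow> real \<Rightarrow> real" where
  "cA1 beta n1 n2 y x = n1*(n2*y+beta*x)/(beta*(n2-n1))"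
definition cA2 :: "real \<Rightarrow> real \<Rightarrow> real \<Rightarrow> real \<Rightarrow> real \<Rightarrow> real" where
  "cA2 beta n1 n2 y x = -n2*(n1*y+beta*x)/(beta*(n2-n1))"

lemma nu_facts:
  fixes beta eps gam :: real
  assumes "beta > 0" "eps > 0" "gam > 0" "eps < gam\<^sup>2 * beta / 4"
  shows "0 < nu1 beta eps gam" "nu1 beta eps gam < nu2 beta eps gam"
    "nu1 beta eps gam + nu2 beta eps gam = gam * beta"
    "nu1 beta eps gam * nu2 beta eps gam = eps * beta"
proof -
  define d where "d = sqrt ((gam * beta)\<^sup>2 - 4 * eps * beta)"
  have pos: "(gam * beta)\<^sup>2 - 4 * eps * beta > 0"
  proof -
    have "4 * eps * beta < gam\<^sup>2 * beta * beta" using assms(1,4) by (simp add: field_simps)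
    thus ?thesis by (simp add: power2_eq_square algebra_simps)
  qed
  have d2: "d\<^sup>2 = (gam * beta)\<^sup>2 - 4 * eps * beta" unfolding d_def using pos by simp
  have dpos: "d > 0" unfolding d_def using pos by simp
  have "d\<^sup>2 < (gam * beta)\<^sup>2" using d2 assms by simp
  hence dlt: "d < gam * beta" using assms dpos by (smt (verit) mult_pos_pos power_mono)
  show "0 < nu1 beta eps gam" unfolding nu1_def d_def[symmetric] using dlt by simp
  show "nu1 beta eps gam < nu2 beta eps gam" unfolding nu1_def nu2_def d_def[symmetric] using dpos by simp
  show "nu1 beta eps gam + nu2 beta eps gam = gam * beta" unfolding nu1_def nu2_def by (simp add: field_simps)
  have "nu1 beta eps gam * nu2 beta eps gam = ((gam*beta)\<^sup>2 - d\<^sup>2)/4"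
    unfolding nu1_def nu2_def d_def[symmetric] by (simp add: power2_eq_square algebra_simps)
  thus "nu1 beta eps gam * nu2 beta eps gam = eps * beta" using d2 by simp
qed

lemma star_norm_eq:
  assumes "beta > 0" "0 < nu1 beta eps gam" "nu1 beta eps gam < nu2 beta eps gam"
  shows "star_norm beta eps gam (y, x) =
     sqrt ((cA1 beta (nu1 beta eps gam) (nu2 beta eps gam) y x)\<^sup>2 + (cA2 beta (nu1 beta eps gam) (nu2 beta eps gam) y x)\<^sup>2)"
proof -
  let ?n1 = "nu1 beta eps gam" and ?n2 = "nu2 beta eps gam"
  have "(THE (a1, a2). (y, x) = a1 *\<^sub>R vvec beta ?n1 + a2 *\<^sub>R vvec beta ?n2)
        = (cA1 beta ?n1 ?n2 y x, cA2 beta ?n1 ?n2 y x)"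
  proof (rule the_equality)
    show "case (cA1 beta ?n1 ?n2 y x, cA2 beta ?n1 ?n2 y x) of (a1, a2) \<Rightarrow>
        (y, x) = a1 *\<^sub>R vvec beta ?n1 + a2 *\<^sub>R vvec beta ?n2"
      using coords[OF assms, of y x] unfolding vvec_def cA1_def cA2_def by simp
  next
    fix p assume h: "case p of (a1, a2) \<Rightarrow> (y, x) = a1 *\<^sub>R vvec beta ?n1 + a2 *\<^sub>R vvec beta ?n2"
    obtain a b where p: "p = (a, b)" by (cases p)
    have "(y, x) = a *\<^sub>R (beta / ?n1, -1) + b *\<^sub>R (beta / ?n2, -1)"
      using h unfolding p vvec_def by simp
    then show "p = (cA1 beta ?n1 ?n2 y x, cA2 beta ?n1 ?n2 y x)"
      unfolding p coords[OF assms] cA1_def cA2_def by simp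
  qed
  then show ?thesis unfolding star_norm_def by simp
qed

lemma cA_lin:
  "cA1 beta n1 n2 y x = (n1*n2/(beta*(n2-n1)))*y + (n1*beta/(beta*(n2-n1)))*x"
  "cA2 beta n1 n2 y x = (-n2*n1/(beta*(n2-n1)))*y + (-n2*beta/(beta*(n2-n1)))*x"
proof -
  have e1: "n1*(n2*y+beta*x) = n1*n2*y + n1*beta*x" by (simp only: distrib_left mult.assoc)
  have e2: "-n2*(n1*y+beta*x) = -n2*n1*y + -n2*beta*x" by (simp only: distrib_left mult.assoc)
  show "cA1 beta n1 n2 y x = (n1*n2/(beta*(n2-n1)))*y + (n1*beta/(beta*(n2-n1)))*x"
    unfolding cA1_def e1 add_divide_distrib times_divide_eq_left ..
  show "cA2 beta n1 n2 y x = (-n2*n1/(beta*(n2-n1)))*y + (-n2*beta/(beta*(n2-n1)))*x"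
    unfolding cA2_def e2 add_divide_distrib times_divide_eq_left ..
qed

lemma key:
  fixes y x :: "real \<Rightarrow> real"
  assumes "beta > 0" "0 < n1" "n1 < n2"
    and dy: "(y has_real_derivative Y) (at t within S)"
    and dx: "(x has_real_derivative X) (at t within S)"
    and c: "cA1 beta n1 n2 (y t) (x t) \<noteq> 0 \<or> cA2 beta n1 n2 (y t) (x t) \<noteq> 0 \<or> (Y = 0 \<and> X = 0)"
  shows "((\<lambda>s. sqrt ((cA1 beta n1 n2 (y s) (x s))\<^sup>2 + (cA2 beta n1 n2 (y s) (x s))\<^sup>2)) has_real_derivative
     (cA1 beta n1 n2 (y t) (x t) * cA1 beta n1 n2 Y X + cA2 beta n1 n2 (y t) (x t) * cA2 beta n1 n2 Y X)
       / sqrt ((cA1 beta n1 n2 (y t) (x t))\<^sup>2 + (cA2 beta n1 n2 (y t) (x t))\<^sup>2)) (at t within S)"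
proof -
  have d1: "((\<lambda>s. cA1 beta n1 n2 (y s) (x s)) has_real_derivative cA1 beta n1 n2 Y X) (at t within S)"
    unfolding cA_lin by (intro DERIV_add DERIV_cmult dy dx)
  have d2: "((\<lambda>s. cA2 beta n1 n2 (y s) (x s)) has_real_derivative cA2 beta n1 n2 Y X) (at t within S)"
    unfolding cA_lin by (intro DERIV_add DERIV_cmult dy dx)
  show ?thesis
  proof (cases "cA1 beta n1 n2 (y t) (x t) \<noteq> 0 \<or> cA2 beta n1 n2 (y t) (x t) \<noteq> 0")
    case True
    show ?thesis by (rule norm_deriv_nz[OF d1 d2 True])
  next
    case False
    with c have "Y = 0" "X = 0" by auto
    hence z: "cA1 beta n1 n2 Y X = 0" "cA2 beta n1 n2 Y X = 0" unfolding cA1_def cA2_def by auto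
    show ?thesis using norm_deriv_z[OF d1[unfolded z] d2[unfolded z]] False by simp
  qed
qed


lemma flow_case:
  fixes y x :: "real \<Rightarrow> real"
  assumes b: "beta > 0" "0 < n1" "n1 < n2" and s: "n1 + n2 = gam * beta" "n1 * n2 = eps * beta"
    and dy: "(y has_real_derivative (beta * x t)) (at t within S)"
    and dx: "(x has_real_derivative (- gam * beta * x t - eps * y t)) (at t within S)"
  shows "\<exists>D. ((\<lambda>s. sqrt ((cA1 beta n1 n2 (y s) (x s))\<^sup>2 + (cA2 beta n1 n2 (y s) (x s))\<^sup>2)) has_real_derivative D) (at t within S)
      \<and> D \<le> - n1 * sqrt ((cA1 beta n1 n2 (y t) (x t))\<^sup>2 + (cA2 beta n1 n2 (y t) (x t))\<^sup>2)"
proof -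
  define a1 where "a1 = cA1 beta n1 n2 (y t) (x t)"
  define a2 where "a2 = cA2 beta n1 n2 (y t) (x t)"
  define N where "N = sqrt (a1\<^sup>2 + a2\<^sup>2)"
  have eps: "eps = n1*n2/beta" using s b by (simp add: field_simps)
  have X: "- gam * beta * x t - eps * y t = -(n1+n2) * x t - (n1*n2/beta) * y t"
    using s eps by (simp add: algebra_simps)
  have ne: "beta \<noteq> 0" "n2 - n1 \<noteq> 0" using b by auto
  have B1: "cA1 beta n1 n2 (beta * x t) (- gam * beta * x t - eps * y t) = -n1 * a1"
    unfolding X a1_def cA1_def using ne by (simp add: field_simps; simp add: algebra_simps)
  have B2: "cA2 beta n1 n2 (beta * x t) (- gam * beta * x t - eps * y t) = -n2 * a2"
    unfolding X a2_def cA2_def using ne by (simp add: field_simps; simp add: algebra_simps)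
  have c: "cA1 beta n1 n2 (y t) (x t) \<noteq> 0 \<or> cA2 beta n1 n2 (y t) (x t) \<noteq> 0 \<or>
      (beta * x t = 0 \<and> - gam * beta * x t - eps * y t = 0)"
  proof (cases "a1 = 0 \<and> a2 = 0")
    case True
    hence "(y t, x t) = a1 *\<^sub>R (beta/n1, -1) + a2 *\<^sub>R (beta/n2, -1)"
      using coords[OF b, of "y t" "x t" a1 a2] unfolding a1_def a2_def cA1_def cA2_def by simp
    with True have "y t = 0" "x t = 0" by auto
    thus ?thesis by simp
  qed (auto simp: a1_def a2_def)
  have D: "((\<lambda>s. sqrt ((cA1 beta n1 n2 (y s) (x s))\<^sup>2 + (cA2 beta n1 n2 (y s) (x s))\<^sup>2)) has_real_derivative
      (a1 * (-n1*a1) + a2 * (-n2*a2)) / N) (at t within S)"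
    using key[OF b dy dx c] unfolding B1 B2 N_def a1_def a2_def .
  have "(a1 * (-n1*a1) + a2 * (-n2*a2)) / N \<le> - n1 * N"
  proof (cases "N = 0")
    case True then show ?thesis by simp
  next
    case False
    hence Np: "N > 0" unfolding N_def by (simp add: sum_power2_gt_zero_iff)
    have N2: "N\<^sup>2 = a1\<^sup>2 + a2\<^sup>2" unfolding N_def by simp
    have "a1 * (-n1*a1) + a2 * (-n2*a2) \<le> -n1 * N\<^sup>2"
    proof -
      have "n1 * a2\<^sup>2 \<le> n2 * a2\<^sup>2" using b by (intro mult_right_mono) auto
      thus ?thesis unfolding N2 by (simp add: power2_eq_square algebra_simps)
    qed
    also have "-n1 * N\<^sup>2 = (- n1 * N) * N" by (simp add: power2_eq_square)
    finally show ?thesis using Np by (simp add: divide_le_eq)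
  qed
  thus ?thesis using D unfolding N_def a1_def a2_def by blast
qed


lemma wall_case:
  fixes y x :: "real \<Rightarrow> real"
  assumes b: "beta > 0" "0 < n1" "n1 < n2" and s: "n1 + n2 = gam * beta" "n1 * n2 = eps * beta"
    and p: "lam > 0" "eps > 0"
    and xt: "x t = - lam / beta" and yt: "y t \<ge> gam * lam / eps"
    and dy: "(y has_real_derivative (- lam)) (at t within S)"
    and dx: "(x has_real_derivative 0) (at t within S)"
  shows "\<exists>D. ((\<lambda>s. sqrt ((cA1 beta n1 n2 (y s) (x s))\<^sup>2 + (cA2 beta n1 n2 (y s) (x s))\<^sup>2)) has_real_derivative D) (at t within S)
      \<and> D \<le> - (lam * eps / (n2 - n1))"
proof -
  define a1 where "a1 = cA1 beta n1 n2 (y t) (x t)"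
  define a2 where "a2 = cA2 beta n1 n2 (y t) (x t)"
  define N where "N = sqrt (a1\<^sup>2 + a2\<^sup>2)"
  define k where "k = eps / (n2 - n1)"
  have ne: "beta \<noteq> 0" "n2 - n1 \<noteq> 0" using b by auto
  have bx: "beta * x t = - lam" using xt b by simp
  have "y t * eps \<ge> gam * lam" using yt p by (simp add: field_simps)
  hence "y t * eps * beta \<ge> gam * lam * beta" using b by (simp add: mult_right_mono)
  hence key1: "y t * (n1 * n2) \<ge> (n1 + n2) * lam" using s by (simp add: algebra_simps)
  have "n1 * (n2 * y t - lam) \<ge> n2 * lam" using key1 by (simp add: algebra_simps)
  moreover have "n2 * lam > 0" using b p by simp
  ultimately have g1: "n1 * (n2 * y t - lam) > 0" by linarith
  have "n2 * (n1 * y t - lam) \<ge> n1 * lam" using key1 by (simp add: algebra_simps)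
  moreover have "n1 * lam > 0" using b p by simp
  ultimately have g2: "n2 * (n1 * y t - lam) > 0" by linarith
  have den: "beta * (n2 - n1) > 0" using b by simp
  have a1p: "a1 > 0" unfolding a1_def cA1_def bx using g1 den by simp
  have a2n: "a2 < 0" unfolding a2_def cA2_def bx using g2 den
    by (simp add: divide_less_0_iff)
  have eps: "eps = n1*n2/beta" using s b by (simp add: field_simps)
  have B1: "cA1 beta n1 n2 (- lam) 0 = - (lam * k)" unfolding cA1_def k_def eps using ne
    by (simp add: field_simps)
  have B2: "cA2 beta n1 n2 (- lam) 0 = lam * k" unfolding cA2_def k_def eps using ne
    by (simp add: field_simps)
  have c: "cA1 beta n1 n2 (y t) (x t) \<noteq> 0 \<or> cA2 beta n1 n2 (y t) (x t) \<noteq> 0 \<or> (- lam = 0 \<and> (0::real) = 0)"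
    using a1p a1_def by auto
  have D: "((\<lambda>s. sqrt ((cA1 beta n1 n2 (y s) (x s))\<^sup>2 + (cA2 beta n1 n2 (y s) (x s))\<^sup>2)) has_real_derivative
      (a1 * (- (lam * k)) + a2 * (lam * k)) / N) (at t within S)"
    using key[OF b dy dx c] unfolding B1 B2 N_def a1_def a2_def .
  have Np: "N > 0" unfolding N_def using a1p by (simp add: sum_power2_gt_zero_iff)
  have "a1\<^sup>2 + a2\<^sup>2 \<le> (a1 - a2)\<^sup>2"
  proof -
    have "a1 * a2 \<le> 0" using a1p a2n by (simp add: mult_pos_neg less_imp_le)
    thus ?thesis by (simp add: power2_eq_square algebra_simps)
  qed
  hence "N \<le> sqrt ((a1 - a2)\<^sup>2)" unfolding N_def by (rule real_sqrt_le_mono)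
  hence NA: "N \<le> a1 - a2" using a1p a2n by simp
  have kp: "lam * k > 0" unfolding k_def using p b by simp
  have "(a1 * (- (lam * k)) + a2 * (lam * k)) / N = - (lam * k) * ((a1 - a2) / N)"
    by (simp add: algebra_simps)
  also have "\<dots> \<le> - (lam * k) * 1"
  proof -
    have "(a1 - a2) / N \<ge> 1" using NA Np by simp
    hence "(lam * k) * 1 \<le> (lam * k) * ((a1 - a2) / N)" using kp by (intro mult_left_mono) auto
    thus ?thesis by (simp only: mult_minus_left)
  qed
  finally have "(a1 * (- (lam * k)) + a2 * (lam * k)) / N \<le> - (lam * eps / (n2 - n1))"
    unfolding k_def by simp
  thus ?thesis using D unfolding N_def a1_def a2_def by blast
qed

theorem lemma2:
  fixes lam beta eps gam :: real
  assumes "lam > 0" "beta > 0" "eps > 0" "gam > 0" "eps < gam\<^sup>2 * beta / 4"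
  shows
    "(\<exists>\<eta>1>0. \<forall>y x t. fluid_model lam beta eps gam y x \<and> regular_point y x t \<and> x t > - lam / beta \<longrightarrow>
        (\<exists>D. ((\<lambda>s. star_norm beta eps gam (y s, x s)) has_real_derivative D) (at t within {0..}) \<and>
             D \<le> - \<eta>1 * star_norm beta eps gam (y t, x t)))
   \<and> (\<exists>\<eta>2>0. \<forall>y x t. fluid_model lam beta eps gam y x \<and> regular_point y x t \<and>
          x t = - lam / beta \<and> y t \<ge> gam * lam / eps \<longrightarrow>
        (\<exists>D. ((\<lambda>s. star_norm beta eps gam (y s, x s)) has_real_derivative D) (at t within {0..}) \<and>
             D \<le> - \<eta>2))
   \<and> (\<exists>\<eta>>0. \<exists>C>0. \<forall>y x t. fluid_model lam beta eps gam y x \<and> regular_point y x t \<and>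
          star_norm beta eps gam (y t, x t) \<ge> C \<longrightarrow>
        (\<exists>D. ((\<lambda>s. star_norm beta eps gam (y s, x s)) has_real_derivative D) (at t within {0..}) \<and>
             D \<le> - \<eta>))"
proof -
  let ?n1 = "nu1 beta eps gam" and ?n2 = "nu2 beta eps gam"
  note nf = nu_facts[OF assms(2-5)]
  have b: "beta > 0" "0 < ?n1" "?n1 < ?n2" using assms nf by auto
  note sf = nf(3,4)
  have SN: "\<And>u v. star_norm beta eps gam (u, v) = sqrt ((cA1 beta ?n1 ?n2 u v)\<^sup>2 + (cA2 beta ?n1 ?n2 u v)\<^sup>2)"
    using star_norm_eq[OF b] by simp
  have SNf: "\<And>y x. (\<lambda>s. star_norm beta eps gam (y s, x s)) =
      (\<lambda>s. sqrt ((cA1 beta ?n1 ?n2 (y s) (x s))\<^sup>2 + (cA2 beta ?n1 ?n2 (y s) (x s))\<^sup>2))"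
    using SN by simp
  define e2 where "e2 = lam * eps / (?n2 - ?n1)"
  have e2p: "e2 > 0" unfolding e2_def using assms b by simp
  have flow: "\<exists>D. ((\<lambda>s. star_norm beta eps gam (y s, x s)) has_real_derivative D) (at t within {0..}) \<and>
             D \<le> - ?n1 * star_norm beta eps gam (y t, x t)"
    if fm: "fluid_model lam beta eps gam y x" and rp: "regular_point y x t"
      and h: "x t > - lam / beta \<or> (x t = - lam / beta \<and> y t \<le> gam * lam / eps)" for y x t
  proof -
    have dd: "(y has_real_derivative (beta * x t)) (at t within {0..}) \<and>
           (x has_real_derivative (- gam * beta * x t - eps * y t)) (at t within {0..})"
    proof (cases "x t > - lam / beta")
      case True
      then show ?thesis using fm rp unfolding fluid_model_def by blast
    next
      case False
      with h have xt: "x t = - lam / beta" and yt: "y t \<le> gam * lam / eps" by auto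
      have "eps * y t \<le> gam * lam" using yt assms by (simp add: field_simps)
      hence m: "max (gam * lam - eps * y t) 0 = - gam * beta * x t - eps * y t"
        using xt assms by simp
      have bx: "beta * x t = - lam" using xt assms by simp
      have "(y has_real_derivative (- lam)) (at t within {0..}) \<and>
          (x has_real_derivative (max (gam * lam - eps * y t) 0)) (at t within {0..})"
        using fm rp xt unfolding fluid_model_def by blast
      thus ?thesis unfolding bx m[symmetric] .
    qed
    show ?thesis unfolding SNf SN using flow_case[OF b sf] dd by blast
  qed
  have wall: "\<exists>D. ((\<lambda>s. star_norm beta eps gam (y s, x s)) has_real_derivative D) (at t within {0..}) \<and>
             D \<le> - e2"
    if fm: "fluid_model lam beta eps gam y x" and rp: "regular_point y x t"
      and xt: "x t = - lam / beta" and yt: "y t \<ge> gam * lam / eps" for y x t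
  proof -
    have "eps * y t \<ge> gam * lam" using yt assms by (simp add: field_simps)
    hence m: "max (gam * lam - eps * y t) 0 = 0" by simp
    have dd0: "(y has_real_derivative (- lam)) (at t within {0..}) \<and>
          (x has_real_derivative (max (gam * lam - eps * y t) 0)) (at t within {0..})"
      using fm rp xt unfolding fluid_model_def by blast
    have dd: "(y has_real_derivative (- lam)) (at t within {0..})"
       "(x has_real_derivative 0) (at t within {0..})"
      using dd0 unfolding m by blast+
    show ?thesis unfolding SNf e2_def using wall_case[OF b sf assms(1,3) xt yt dd] by blast
  qed
  show ?thesis
  proof (intro conjI)
    show "\<exists>\<eta>1>0. \<forall>y x t. fluid_model lam beta eps gam y x \<and> regular_point y x t \<and> x t > - lam / beta \<longrightarrow>
        (\<exists>D. ((\<lambda>s. star_norm beta eps gam (y s, x s)) has_real_derivative D) (at t within {0..}) \<and>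
             D \<le> - \<eta>1 * star_norm beta eps gam (y t, x t))"
      using flow b by blast
    show "\<exists>\<eta>2>0. \<forall>y x t. fluid_model lam beta eps gam y x \<and> regular_point y x t \<and>
          x t = - lam / beta \<and> y t \<ge> gam * lam / eps \<longrightarrow>
        (\<exists>D. ((\<lambda>s. star_norm beta eps gam (y s, x s)) has_real_derivative D) (at t within {0..}) \<and>
             D \<le> - \<eta>2)"
      using wall e2p by blast
    show "\<exists>\<eta>>0. \<exists>C>0. \<forall>y x t. fluid_model lam beta eps gam y x \<and> regular_point y x t \<and>
          star_norm beta eps gam (y t, x t) \<ge> C \<longrightarrow>
        (\<exists>D. ((\<lambda>s. star_norm beta eps gam (y s, x s)) has_real_derivative D) (at t within {0..}) \<and>
             D \<le> - \<eta>)"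
    proof -
      have mp: "min ?n1 e2 > 0" using b e2p by simp
      have "\<forall>y x t. fluid_model lam beta eps gam y x \<and> regular_point y x t \<and>
          star_norm beta eps gam (y t, x t) \<ge> 1 \<longrightarrow>
        (\<exists>D. ((\<lambda>s. star_norm beta eps gam (y s, x s)) has_real_derivative D) (at t within {0..}) \<and>
             D \<le> - min ?n1 e2)"
      proof (intro allI impI)
      fix y x t assume H: "fluid_model lam beta eps gam y x \<and> regular_point y x t \<and>
          star_norm beta eps gam (y t, x t) \<ge> 1"
      hence fm: "fluid_model lam beta eps gam y x" and rp: "regular_point y x t"
        and N1: "star_norm beta eps gam (y t, x t) \<ge> 1" by auto
      have xge: "x t \<ge> - lam / beta" using fm rp unfolding fluid_model_def regular_point_def by auto
      show "\<exists>D. ((\<lambda>s. star_norm beta eps gam (y s, x s)) has_real_derivative D) (at t within {0..}) \<and>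
             D \<le> - min ?n1 e2"
      proof (cases "x t = - lam / beta \<and> y t \<ge> gam * lam / eps")
        case True
        then obtain D where "((\<lambda>s. star_norm beta eps gam (y s, x s)) has_real_derivative D) (at t within {0..})"
          "D \<le> - e2" using wall[OF fm rp] by blast
        thus ?thesis by (intro exI[of _ D]) auto
      next
        case False
        hence "x t > - lam / beta \<or> (x t = - lam / beta \<and> y t \<le> gam * lam / eps)" using xge by auto
        then obtain D where D: "((\<lambda>s. star_norm beta eps gam (y s, x s)) has_real_derivative D) (at t within {0..})"
          "D \<le> - ?n1 * star_norm beta eps gam (y t, x t)" using flow[OF fm rp] by blast
        have "?n1 * 1 \<le> ?n1 * star_norm beta eps gam (y t, x t)"
          using N1 b by (intro mult_left_mono) auto
        hence "D \<le> - ?n1" using D(2) by simp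
        thus ?thesis using D(1) by (intro exI[of _ D]) auto
      qed
      qed
      then show ?thesis using mp by (intro exI[of _ "min ?n1 e2"] conjI exI[of _ "1::real"]) auto
    qed
  qed
qed

end
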